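(* Let $N\ge3$ and let $\varphi_1',\dots,\varphi_{N-1}'\in\mathbb R$ with $\sum_{j=1}^{N-1}\varphi_j'\equiv\pi/2\pmod{2\pi}$. Take $X_j=\sigma_x$, $X_j'=\cos\varphi_j'\sigma_x+\sin\varphi_j'\sigma_y$ for $j=1,\dots,N-1$, and $X_N=(\sigma_x-\sigma_y)/\sqrt2$, $X_N'=(\sigma_x+\sigma_y)/\sqrt2$; let $I^N_{CHSH}=\sum_{a,b\in\{0,1\}}(-1)^{ab}\mathbb A_a\otimes\mathbb B_b$. Then for every subset $K\subseteq\{1,\dots,N-1\}$ satisfying $\sum_{k\in K}\varphi_k'\equiv0\pmod\pi$, the state $\bigotimes_{k\in K}\sigma_x^{(k)}|G\rangle$ is an eigenvector of $I^N_{CHSH}$ with eigenvalue $2\sqrt2$ (in particular, for $K=\emptyset$, $I^N_{CHSH}|G\rangle=2\sqrt2|G\rangle$). Moreover, for no subset $K$ do both $K$ and its complement $\{1,\dots,N-1\}\setminus K$ satisfy this condition, so at most $2^{N-2}$ subsets $K$ satisfy it.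
   Context: $|G\rangle=\frac{1}{\sqrt2}(|0\cdots0\rangle+|1\cdots1\rangle)$ is the $N$-qubit GHZ state; $\sigma_x,\sigma_y,\sigma_z$ are Pauli matrices and $\sigma_x^{(k)}$ denotes $\sigma_x$ acting on the $k$-th qubit. $\mathbb A_0=\bigotimes_{j=1}^{N-1}X_j$, $\mathbb A_1=\bigotimes_{j=1}^{N-1}X_j'$ act on qubits $1,\dots,N-1$, and $\mathbb B_0=X_N$, $\mathbb B_1=X_N'$ act on qubit $N$. *)

theory Defs
  imports "HOL-Analysis.Analysis"
begin

text \<open>Single-qubit operators as 2x2 complex matrices indexed by the basis
  (False = |0>, True = |1>); entry M a b = <a|M|b>.\<close>
type_synonym qmat = "bool \<Rightarrow> bool \<Rightarrow> complex"

text \<open>N-qubit states: amplitudes on bit strings (lists of length N);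
  position j-1 of the list is the j-th qubit (j = 1..N).\<close>
type_synonym qstate = "bool list \<Rightarrow> complex"

definition id2 :: qmat where "id2 a b = (if a = b then 1 else 0)"
definition sigma_x :: qmat where "sigma_x a b = (if a \<noteq> b then 1 else 0)"
definition sigma_y :: qmat where
  "sigma_y a b = (if a = b then 0 else if a then \<i> else - \<i>)"

definition prod_op :: "nat \<Rightarrow> (nat \<Rightarrow> qmat) \<Rightarrow> qstate \<Rightarrow> qstate" where
  "prod_op N M psi x =
     (if length x = N then
        (\<Sum>y\<in>{ys::bool list. length ys = N}.
           (\<Prod>j\<in>{1..N}. M j (x ! (j - 1)) (y ! (j - 1))) * psi y)
      else 0)"

definition ghz :: "nat \<Rightarrow> qstate" where
  "ghz N x = (if x = replicate N False \<or> x = replicate N True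
              then complex_of_real (1 / sqrt 2) else 0)"

definition Xrot :: "real \<Rightarrow> qmat" where
  "Xrot phi a b = complex_of_real (cos phi) * sigma_x a b + complex_of_real (sin phi) * sigma_y a b"

definition XN0 :: qmat where
  "XN0 a b = (sigma_x a b - sigma_y a b) / complex_of_real (sqrt 2)"
definition XN1 :: qmat where
  "XN1 a b = (sigma_x a b + sigma_y a b) / complex_of_real (sqrt 2)"

definition chsh_local :: "nat \<Rightarrow> (nat \<Rightarrow> real) \<Rightarrow> nat \<Rightarrow> nat \<Rightarrow> nat \<Rightarrow> qmat" where
  "chsh_local N phi a b j =
     (if j < N then (if a = 0 then sigma_x else Xrot (phi j))
      else (if b = 0 then XN0 else XN1))"

definition chsh_op :: "nat \<Rightarrow> (nat \<Rightarrow> real) \<Rightarrow> qstate \<Rightarrow> qstate" where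
  "chsh_op N phi psi x =
     (\<Sum>a\<in>{0,1::nat}. \<Sum>b\<in>{0,1::nat}.
        (-1) ^ (a * b) * prod_op N (chsh_local N phi a b) psi x)"

definition flipped_ghz :: "nat \<Rightarrow> nat set \<Rightarrow> qstate" where
  "flipped_ghz N K = prod_op N (\<lambda>j. if j \<in> K then sigma_x else id2) (ghz N)"

definition zero_mod_pi :: "(nat \<Rightarrow> real) \<Rightarrow> nat set \<Rightarrow> bool" where
  "zero_mod_pi phi K = (\<exists>m::int. (\<Sum>k\<in>K. phi k) = of_int m * pi)"

end

theory Submission
  imports Defs
begin

lemma fin_lists: "finite {ys::bool list. length ys = N}"
  using finite_lists_length_eq[of "UNIV::bool set" N] by simp

lemma prod_op_mono:
  assumes len: "length x = N"
  and M: "\<And>j a b. j \<in> {1..N} \<Longrightarrow> M j a b = (if b = (a \<noteq> t j) then w j a else 0)"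
  shows "prod_op N M psi x = (\<Prod>j\<in>{1..N}. w j (x!(j-1))) * psi (map (\<lambda>i. x!i \<noteq> t (Suc i)) [0..<N])"
proof -
  define y0 where "y0 = map (\<lambda>i. x!i \<noteq> t (Suc i)) [0..<N]"
  have ly: "length y0 = N" by (simp add: y0_def)
  have y0n: "\<And>j. j \<in> {1..N} \<Longrightarrow> y0!(j-1) = (x!(j-1) \<noteq> t j)"
    by (auto simp: y0_def)
  have key: "(\<Prod>j\<in>{1..N}. M j (x!(j-1)) (y!(j-1))) * psi y = (if y = y0 then (\<Prod>j\<in>{1..N}. w j (x!(j-1))) * psi y0 else 0)"
    if ly2: "length y = N" for y
  proof (cases "y = y0")
    case True
    then show ?thesis using M y0n by (auto intro!: prod.cong)
  next
    case False
    then obtain i where i: "i < N" "y!i \<noteq> y0!i" using ly2 ly by (auto simp: list_eq_iff_nth_eq)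
    have si: "Suc i \<in> {1..N}" using i by auto
    have z: "M (Suc i) (x!(Suc i - 1)) (y!(Suc i - 1)) = 0"
      using M[OF si] y0n[OF si] i by auto
    have "(\<Prod>j\<in>{1..N}. M j (x!(j-1)) (y!(j-1))) = 0"
      using z si by (intro prod_zero) (simp, metis)
    then show ?thesis using False by simp
  qed
  have "prod_op N M psi x = (\<Sum>y\<in>{ys::bool list. length ys = N}. (if y = y0 then (\<Prod>j\<in>{1..N}. w j (x!(j-1))) * psi y0 else 0))"
    unfolding prod_op_def using len key by (auto intro!: sum.cong)
  also have "\<dots> = (\<Prod>j\<in>{1..N}. w j (x!(j-1))) * psi y0"
    using fin_lists ly by (simp add: sum.delta')
  finally show ?thesis by (simp add: y0_def)
qed

lemma prod_cis: "finite A \<Longrightarrow> (\<Prod>j\<in>A. cis (f j)) = cis (\<Sum>j\<in>A. f j)"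
  by (induct rule: finite_induct) (simp_all add: cis_mult)

definition sK :: "nat \<Rightarrow> nat set \<Rightarrow> bool list" where
  "sK N K = map (\<lambda>i. Suc i \<in> K) [0..<N]"

lemma flipped_char:
  "flipped_ghz N K x = (if x = sK N K \<or> x = map Not (sK N K) then complex_of_real (1 / sqrt 2) else 0)"
proof (cases "length x = N")
  case False
  then have "x \<noteq> sK N K \<and> x \<noteq> map Not (sK N K)" by (auto simp: sK_def)
  then show ?thesis using False by (simp add: flipped_ghz_def prod_op_def)
next
  case True
  have "flipped_ghz N K x = (\<Prod>j\<in>{1..N}. (\<lambda>j a. 1::complex) j (x!(j-1))) * ghz N (map (\<lambda>i. x!i \<noteq> (Suc i \<in> K)) [0..<N])"
    unfolding flipped_ghz_def
    by (rule prod_op_mono[OF True]) (auto simp: id2_def sigma_x_def)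
  also have "\<dots> = ghz N (map (\<lambda>i. x!i \<noteq> (Suc i \<in> K)) [0..<N])" by simp
  also have "\<dots> = (if x = sK N K \<or> x = map Not (sK N K) then complex_of_real (1 / sqrt 2) else 0)"
  proof -
    have a: "(map (\<lambda>i. x!i \<noteq> (Suc i \<in> K)) [0..<N] = replicate N False) = (x = sK N K)"
      using True by (auto simp: list_eq_iff_nth_eq sK_def)
    have b: "(map (\<lambda>i. x!i \<noteq> (Suc i \<in> K)) [0..<N] = replicate N True) = (x = map Not (sK N K))"
      using True by (auto simp: list_eq_iff_nth_eq sK_def)
    show ?thesis unfolding ghz_def a b by simp
  qed
  finally show ?thesis .
qed


lemma chsh_local_mono:
  "chsh_local N phi a b j c d = (if d = (c \<noteq> True) then chsh_local N phi a b j c (\<not> c) else 0)"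
  by (cases c; cases d) (auto simp: chsh_local_def sigma_x_def sigma_y_def Xrot_def XN0_def XN1_def)

lemma prod_op_chsh:
  assumes "length x = N"
  shows "prod_op N (chsh_local N phi a b) psi x =
    (\<Prod>j\<in>{1..N}. chsh_local N phi a b j (x!(j-1)) (\<not> x!(j-1))) * psi (map Not x)"
proof -
  have "map (\<lambda>i. x!i \<noteq> (\<lambda>_. True) (Suc i)) [0..<N] = map Not x"
    using assms by (simp add: list_eq_iff_nth_eq)
  moreover have "prod_op N (chsh_local N phi a b) psi x =
    (\<Prod>j\<in>{1..N}. (\<lambda>j c. chsh_local N phi a b j c (\<not> c)) j (x!(j-1))) * psi (map (\<lambda>i. x!i \<noteq> (\<lambda>_. True) (Suc i)) [0..<N])"
    by (rule prod_op_mono[OF assms]) (rule chsh_local_mono)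
  ultimately show ?thesis by simp
qed

lemma chsh_eval:
  assumes "length x = N" "N \<ge> 1"
  shows "chsh_op N phi psi x =
    ((1 + (\<Prod>j\<in>{1..N-1}. Xrot (phi j) (x!(j-1)) (\<not> x!(j-1)))) * XN0 (x!(N-1)) (\<not> x!(N-1))
     + (1 - (\<Prod>j\<in>{1..N-1}. Xrot (phi j) (x!(j-1)) (\<not> x!(j-1)))) * XN1 (x!(N-1)) (\<not> x!(N-1)))
    * psi (map Not x)"
proof -
  have ins: "{1..N} = insert N {1..N-1}" using assms(2) by auto
  have split: "(\<Prod>j\<in>{1..N}. chsh_local N phi a b j (x!(j-1)) (\<not> x!(j-1))) =
     (\<Prod>j\<in>{1..N-1}. chsh_local N phi a b j (x!(j-1)) (\<not> x!(j-1))) * chsh_local N phi a b N (x!(N-1)) (\<not> x!(N-1))" for a b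
    unfolding ins by (subst prod.insert) auto
  have p0: "(\<Prod>j\<in>{1..N-1}. chsh_local N phi 0 b j (x!(j-1)) (\<not> x!(j-1))) = 1" for b
    by (rule prod.neutral) (auto simp: chsh_local_def sigma_x_def)
  have p1: "(\<Prod>j\<in>{1..N-1}. chsh_local N phi 1 b j (x!(j-1)) (\<not> x!(j-1))) =
      (\<Prod>j\<in>{1..N-1}. Xrot (phi j) (x!(j-1)) (\<not> x!(j-1)))" for b
    by (rule prod.cong) (auto simp: chsh_local_def)
  show ?thesis
  proof -
    have n0: "chsh_local N phi a 0 N = XN0" for a by (simp add: chsh_local_def)
    have n1: "chsh_local N phi a 1 N = XN1" for a by (simp add: chsh_local_def)
    show ?thesis
      unfolding chsh_op_def prod_op_chsh[OF assms(1)]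
      by (simp add: split p0 p1 n0 n1 del: One_nat_def) (simp add: algebra_simps)
  qed
qed

lemma Xrot_cis: "Xrot p c (\<not> c) = cis (if c then p else - p)"
  by (cases c) (auto simp: Xrot_def sigma_x_def sigma_y_def complex_eq_iff)


lemma XrT: "Xrot p True False = cis p" using Xrot_cis[of p True] by simp
lemma XrF: "Xrot p False True = cis (- p)" using Xrot_cis[of p False] by simp

lemma coeff0: "(1 + - \<i>) * XN0 False True + (1 - - \<i>) * XN1 False True = complex_of_real (2 * sqrt 2)"
  by (simp add: XN0_def XN1_def sigma_x_def sigma_y_def complex_eq_iff field_simps)
lemma coeff1: "(1 + \<i>) * XN0 True False + (1 - \<i>) * XN1 True False = complex_of_real (2 * sqrt 2)"
  by (simp add: XN0_def XN1_def sigma_x_def sigma_y_def complex_eq_iff field_simps)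

lemma sum_signs: "finite A \<Longrightarrow> K \<subseteq> A \<Longrightarrow>
   (\<Sum>j\<in>A. if j \<in> K then f j else - f j) = 2 * (\<Sum>j\<in>K. f j) - (\<Sum>j\<in>A. f j :: real)"
proof -
  assume A: "finite A" "K \<subseteq> A"
  have "(\<Sum>j\<in>A. if j \<in> K then f j else - f j) = (\<Sum>j\<in>A. 2 * (if j \<in> K then f j else 0) - f j)"
    by (rule sum.cong) auto
  also have "\<dots> = 2 * (\<Sum>j\<in>A. if j \<in> K then f j else 0) - (\<Sum>j\<in>A. f j)"
    by (simp add: sum_subtractf sum_distrib_left)
  also have "(\<Sum>j\<in>A. if j \<in> K then f j else 0) = (\<Sum>j\<in>K. f j)"
    using sum.inter_restrict[OF A(1), of f K] A(2) by (simp add: inf.absorb2)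
  finally show ?thesis .
qed


lemma map_Not_Not: "map Not (map Not y) = y" by (induct y) auto

theorem mainTheorem5:
  fixes N :: nat and phi :: "nat \<Rightarrow> real"
  assumes "N \<ge> 3"
    and "\<exists>m::int. (\<Sum>j\<in>{1..N-1}. phi j) = pi / 2 + 2 * pi * of_int m"
  shows "(\<forall>K. K \<subseteq> {1..N-1} \<and> zero_mod_pi phi K \<longrightarrow>
            flipped_ghz N K \<noteq> (\<lambda>_. 0) \<and>
            chsh_op N phi (flipped_ghz N K) =
              (\<lambda>x. complex_of_real (2 * sqrt 2) * flipped_ghz N K x))
      \<and> (\<forall>K. K \<subseteq> {1..N-1} \<longrightarrow>
            \<not> (zero_mod_pi phi K \<and> zero_mod_pi phi ({1..N-1} - K)))
      \<and> card {K. K \<subseteq> {1..N-1} \<and> zero_mod_pi phi K} \<le> 2 ^ (N - 2)"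
proof -
  obtain m where m: "(\<Sum>j\<in>{1..N-1}. phi j) = pi / 2 + 2 * pi * of_int m" using assms(2) by blast
  have part1: "\<forall>K. K \<subseteq> {1..N-1} \<and> zero_mod_pi phi K \<longrightarrow>
            flipped_ghz N K \<noteq> (\<lambda>_. 0) \<and>
            chsh_op N phi (flipped_ghz N K) =
              (\<lambda>x. complex_of_real (2 * sqrt 2) * flipped_ghz N K x)"
  proof (intro allI impI, elim conjE)
    fix K assume KA: "K \<subseteq> {1..N-1}" and z: "zero_mod_pi phi K"
    obtain n where n: "(\<Sum>k\<in>K. phi k) = of_int n * pi" using z zero_mod_pi_def by auto
    define s where "s = sK N K"
    have ls: "length s = N" by (simp add: s_def sK_def)
    have sj: "s!(j-1) = (j \<in> K)" if "j \<in> {1..N-1}" for j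
      using that assms(1) by (auto simp: s_def sK_def)
    have sj': "(map Not s)!(j-1) = (j \<notin> K)" if "j \<in> {1..N-1}" for j
      using sj[OF that] that ls by auto
    have NK: "N \<notin> K" using KA assms(1) by auto
    have sN: "s!(N-1) = False" using assms(1) NK by (simp add: s_def sK_def)
    have F: "flipped_ghz N K x = (if x = s \<or> x = map Not s then complex_of_real (1 / sqrt 2) else 0)" for x
      by (simp add: flipped_char s_def)
    have Fnot: "flipped_ghz N K (map Not x) = flipped_ghz N K x" for x
      unfolding F by (metis map_Not_Not)
    have sumA: "(\<Sum>j\<in>{1..N-1}. if j \<in> K then phi j else - phi j) = 2 * (of_int n * pi) - (pi / 2 + 2 * pi * of_int m)"
      using sum_signs[of "{1..N-1}" K phi] KA n m by simp
    have Ps: "(\<Prod>j\<in>{1..N-1}. Xrot (phi j) (s!(j-1)) (\<not> s!(j-1))) = - \<i>"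
    proof -
      have "(\<Prod>j\<in>{1..N-1}. Xrot (phi j) (s!(j-1)) (\<not> s!(j-1))) = (\<Prod>j\<in>{1..N-1}. cis (if j \<in> K then phi j else - phi j))"
        by (rule prod.cong[OF refl]) (frule sj, simp add: Xrot_cis)
      also have "\<dots> = cis (2 * (of_int n * pi) - (pi / 2 + 2 * pi * of_int m))"
        by (simp only: prod_cis[OF finite_atLeastAtMost] sumA)
      also have "\<dots> = cis (-(pi/2)) * cis (2 * pi * of_int (n - m))"
        unfolding cis_mult by (rule arg_cong[where f=cis]) (simp add: algebra_simps)
      also have "\<dots> = - \<i>" by simp
      finally show ?thesis .
    qed
    have Pns: "(\<Prod>j\<in>{1..N-1}. Xrot (phi j) (map Not s!(j-1)) (\<not> map Not s!(j-1))) = \<i>"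
    proof -
      have "(\<Prod>j\<in>{1..N-1}. Xrot (phi j) (map Not s!(j-1)) (\<not> map Not s!(j-1))) = (\<Prod>j\<in>{1..N-1}. cis (- (if j \<in> K then phi j else - phi j)))"
        by (rule prod.cong[OF refl]) (frule sj', simp add: Xrot_cis XrT XrF)
      also have "\<dots> = cis (- (2 * (of_int n * pi) - (pi / 2 + 2 * pi * of_int m)))"
        by (simp only: prod_cis[OF finite_atLeastAtMost] sum_negf sumA)
      also have "\<dots> = cis (pi/2) * cis (2 * pi * of_int (m - n))"
        unfolding cis_mult by (rule arg_cong[where f=cis]) (simp add: algebra_simps)
      also have "\<dots> = \<i>" by simp
      finally show ?thesis .
    qed
    have nsN: "map Not s ! (N-1) = True" using sN ls assms(1) by simp
    show "flipped_ghz N K \<noteq> (\<lambda>_. 0) \<and>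
            chsh_op N phi (flipped_ghz N K) =
              (\<lambda>x. complex_of_real (2 * sqrt 2) * flipped_ghz N K x)"
    proof
      have "flipped_ghz N K s \<noteq> 0" by (simp add: F)
      then show "flipped_ghz N K \<noteq> (\<lambda>_. 0)" by metis
    next
      show "chsh_op N phi (flipped_ghz N K) =
              (\<lambda>x. complex_of_real (2 * sqrt 2) * flipped_ghz N K x)"
      proof
        fix x
        show "chsh_op N phi (flipped_ghz N K) x = complex_of_real (2 * sqrt 2) * flipped_ghz N K x"
        proof (cases "length x = N")
          case False
          then have "x \<noteq> s \<and> x \<noteq> map Not s" using ls by auto
          then show ?thesis using False by (simp add: F chsh_op_def prod_op_def)
        next
          case True
          have N1: "N \<ge> 1" using assms(1) by simp
          note ev = chsh_eval[OF True N1, of phi "flipped_ghz N K"]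
          show ?thesis
          proof (cases "x = s")
            case True
            show ?thesis using ev coeff0 unfolding True Ps sN Fnot by simp
          next
            case xs: False
            show ?thesis
            proof (cases "x = map Not s")
              case True
              show ?thesis using ev coeff1 unfolding True Pns nsN Fnot by simp
            next
              case False
              then have "flipped_ghz N K x = 0" using xs F by simp
              then show ?thesis using assms(1) by (simp add: ev Fnot)
            qed
          qed
        qed
      qed
    qed
  qed
  have part2: "\<forall>K. K \<subseteq> {1..N-1} \<longrightarrow>
            \<not> (zero_mod_pi phi K \<and> zero_mod_pi phi ({1..N-1} - K))"
  proof (intro allI impI notI, elim conjE)
    fix K assume KA: "K \<subseteq> {1..N-1}" and z1: "zero_mod_pi phi K" and z2: "zero_mod_pi phi ({1..N-1} - K)"
    obtain n where n: "(\<Sum>k\<in>K. phi k) = of_int n * pi" using z1 zero_mod_pi_def by auto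
    obtain n' where n': "(\<Sum>k\<in>{1..N-1} - K. phi k) = of_int n' * pi" using z2 zero_mod_pi_def by auto
    have "(\<Sum>j\<in>{1..N-1}. phi j) = (\<Sum>k\<in>{1..N-1} - K. phi k) + (\<Sum>k\<in>K. phi k)"
      using sum.subset_diff[OF KA] by simp
    then have "of_int n' * pi + of_int n * pi = pi / 2 + 2 * pi * of_int m" using n n' m by simp
    then have "real_of_int (2 * n' + 2 * n - 1 - 4 * m) * pi = 0" by (simp add: algebra_simps)
    then have "2 * n' + 2 * n - 1 - 4 * m = 0" by simp
    then show False by presburger
  qed
  have part3: "card {K. K \<subseteq> {1..N-1} \<and> zero_mod_pi phi K} \<le> 2 ^ (N - 2)"
  proof -
    define A where "A = {1..N-1}"
    define S where "S = {K. K \<subseteq> A \<and> zero_mod_pi phi K}"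
    define T where "T = (\<lambda>K. A - K) ` S"
    have fin: "finite (Pow A)" by (simp add: A_def)
    have SP: "S \<subseteq> Pow A" and TP: "T \<subseteq> Pow A" by (auto simp: S_def T_def)
    have disj: "S \<inter> T = {}"
    proof (rule ccontr)
      assume "S \<inter> T \<noteq> {}"
      then obtain K where "K \<in> S" "K \<in> T" by blast
      then obtain K' where K': "K' \<in> S" "K = A - K'" by (auto simp: T_def)
      have "A - K = K'" using K' S_def by auto
      then show False using part2 K' \<open>K \<in> S\<close> unfolding S_def A_def by auto
    qed
    have inj: "inj_on (\<lambda>K. A - K) S" by (rule inj_onI) (auto simp: S_def)
    have cT: "card T = card S" unfolding T_def using inj by (rule card_image)
    have "card S + card T = card (S \<union> T)"
      using disj SP TP fin by (metis card_Un_disjoint finite_subset)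
    also have "\<dots> \<le> card (Pow A)" using SP TP fin by (intro card_mono) auto
    also have "\<dots> = 2 ^ (N - 1)" by (simp add: A_def card_Pow)
    also have "\<dots> = 2 * 2 ^ (N - 2)"
    proof -
      have "N = Suc (Suc (N - 2))" using assms(1) by arith
      then show ?thesis by (metis power_Suc diff_Suc_1)
    qed
    finally show ?thesis using cT unfolding S_def A_def by simp
  qed
  show ?thesis using part1 part2 part3 by blast
qed

end
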